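(* Let $\tau>0$, $u_n\in\mathcal V_{[0,1]}$ with $M:=\mathcal M(u_n)\in(0,\mathcal M(\mathbf 1))$. Let $\alpha_1<\dots<\alpha_K$ be the distinct values of $e^{-\tau\Delta}u_n$, $a_\alpha:=\sum_{i:(e^{-\tau\Delta}u_n)_i=\alpha}d_i^r$, and $k\in\{1,\dots,K\}$ the unique index with $\sum_{l=k+1}^K a_{\alpha_l} < M \leq \sum_{l=k}^K a_{\alpha_l}$. For $0\le\lambda<1$ let $u^\lambda_{n+1}$ be the unique minimiser of $(1-\lambda)\|u\|^2_{\mathcal V}-2\langle u,e^{-\tau\Delta}u_n\rangle_{\mathcal V}$ over $\{u\in\mathcal V_{[0,1]}:\mathcal M(u)=M\}$. Then there is $\delta>0$, depending only on $e^{-\tau\Delta}u_n$, such that for every $\lambda\in(1-\delta,1)$ and all $i\in V$ \[ (u^\lambda _{n+1})_i=\begin{cases} 0, &\text{if } (e^{-\tau\Delta}u_n)_i< \alpha_{k}, \\ a_{\alpha_k}^{-1}\left(M - \sum_{l=k+1}^K a_{\alpha_l}\right) , &\text{if } (e^{-\tau\Delta}u_n)_i =\alpha_k,\\ 1, &\text{if } (e^{-\tau\Delta}u_n)_i > \alpha_{k}, \end{cases} \] and hence $u^\lambda_{n+1}$ converges as $\lambda\uparrow1$ to the function given by the right-hand side.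
   Context: $G=(V,E)$ is a finite, simple, connected, undirected graph with weights $\omega_{ij}=\omega_{ji}>0$ for $ij\in E$, $\omega_{ij}=0$ otherwise; $d_i=\sum_j\omega_{ij}$, $r\in[0,1]$ fixed. $\mathcal V$ = functions $V\to\mathbb R$ with $\langle u,v\rangle_{\mathcal V}=\sum_i u_iv_id_i^r$ and norm $\|\cdot\|_{\mathcal V}$; $\mathcal V_{[0,1]}$ = functions $V\to[0,1]$. $(\Delta u)_i=d_i^{-r}\sum_j\omega_{ij}(u_i-u_j)$, $e^{-\tau\Delta}$ its matrix exponential. $\mathbf 1$ all-ones; $\mathcal M(u)=\langle u,\mathbf 1\rangle_{\mathcal V}$. *)

theory Defs
  imports "HOL-Analysis.Analysis"
begin

text \<open>Vertices are the elements of a finite type 'n; functions V to R are vectors real^'n.\<close>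

definition weighted_graph :: "('n::finite \<Rightarrow> 'n \<Rightarrow> real) \<Rightarrow> bool" where
  "weighted_graph w \<longleftrightarrow>
     (\<forall>i j. w i j = w j i) \<and> (\<forall>i j. 0 \<le> w i j) \<and> (\<forall>i. w i i = 0) \<and>
     (\<forall>i j. (i, j) \<in> {(a, b). 0 < w a b}\<^sup>*)"

definition deg :: "('n::finite \<Rightarrow> 'n \<Rightarrow> real) \<Rightarrow> 'n \<Rightarrow> real" where
  "deg w i = (\<Sum>j\<in>UNIV. w i j)"

text \<open>Real power with the convention x^0 = 1 (Isabelle's powr has 0 powr 0 = 0).\<close>
definition rpow :: "real \<Rightarrow> real \<Rightarrow> real" where
  "rpow x r = (if r = 0 then 1 else x powr r)"

definition dr :: "('n::finite \<Rightarrow> 'n \<Rightarrow> real) \<Rightarrow> real \<Rightarrow> 'n \<Rightarrow> real" where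
  "dr w r i = rpow (deg w i) r"

definition lap :: "('n::finite \<Rightarrow> 'n \<Rightarrow> real) \<Rightarrow> real \<Rightarrow> real^'n \<Rightarrow> real^'n" where
  "lap w r u = (\<chi> i. inverse (dr w r i) * (\<Sum>j\<in>UNIV. w i j * (u $ i - u $ j)))"

definition heat :: "('n::finite \<Rightarrow> 'n \<Rightarrow> real) \<Rightarrow> real \<Rightarrow> real \<Rightarrow> real^'n \<Rightarrow> real^'n" where
  "heat w r \<tau> u = (\<Sum>k. (((- \<tau>) ^ k) / fact k) *\<^sub>R ((lap w r ^^ k) u))"

definition ipV :: "('n::finite \<Rightarrow> 'n \<Rightarrow> real) \<Rightarrow> real \<Rightarrow> real^'n \<Rightarrow> real^'n \<Rightarrow> real" where
  "ipV w r u v = (\<Sum>i\<in>UNIV. u $ i * v $ i * dr w r i)"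

definition ones :: "real^'n::finite" where
  "ones = (\<chi> i. 1)"

definition mass :: "('n::finite \<Rightarrow> 'n \<Rightarrow> real) \<Rightarrow> real \<Rightarrow> real^'n \<Rightarrow> real" where
  "mass w r u = ipV w r u ones"

definition unit_valued :: "real^'n::finite \<Rightarrow> bool" where
  "unit_valued u \<longleftrightarrow> (\<forall>i. 0 \<le> u $ i \<and> u $ i \<le> 1)"

definition objective :: "('n::finite \<Rightarrow> 'n \<Rightarrow> real) \<Rightarrow> real \<Rightarrow> real \<Rightarrow> real^'n \<Rightarrow> real^'n \<Rightarrow> real" where
  "objective w r lam v u = (1 - lam) * ipV w r u u - 2 * ipV w r u v"

definition is_minimiser :: "('n::finite \<Rightarrow> 'n \<Rightarrow> real) \<Rightarrow> real \<Rightarrow> real \<Rightarrow> real \<Rightarrow> real^'n \<Rightarrow> real^'n \<Rightarrow> bool" where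
  "is_minimiser w r lam M v u \<longleftrightarrow>
     unit_valued u \<and> mass w r u = M \<and>
     (\<forall>u'. unit_valued u' \<and> mass w r u' = M \<longrightarrow> objective w r lam v u \<le> objective w r lam v u')"

definition values_sorted :: "real^'n::finite \<Rightarrow> real list" where
  "values_sorted v = sorted_list_of_set (range (\<lambda>i. v $ i))"

definition level_mass :: "('n::finite \<Rightarrow> 'n \<Rightarrow> real) \<Rightarrow> real \<Rightarrow> real^'n \<Rightarrow> real \<Rightarrow> real" where
  "level_mass w r v \<alpha> = (\<Sum>i\<in>{i. v $ i = \<alpha>}. dr w r i)"

end

theory Submission
  imports Defs
begin

lemma key_pointwise:
  fixes u t v d c e :: real
  assumes "0 \<le> d" "0 \<le> (u - t) * (e * t - v + c)"
  shows "(e*t^2 - 2*t* v)*d + e*((u - t)^2*d) - 2*c*(u*d - t*d) \<le> (e*u^2 - 2*u* v)*d"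
proof -
  have "(e*u^2 - 2*u* v)*d - ((e*t^2 - 2*t* v)*d + e*((u - t)^2*d) - 2*c*(u*d - t*d))
        = 2*d*((u - t) * (e * t - v + c))"
    by (simp add: algebra_simps power2_eq_square)
  moreover have "0 \<le> 2*d*((u - t) * (e * t - v + c))" using assms by simp
  ultimately show ?thesis by linarith
qed

lemma key:
  fixes d v u t :: "'n::finite \<Rightarrow> real" and \<alpha> \<theta> \<epsilon> :: real
  assumes dpos: "\<And>i. 0 < d i" and th: "0 < \<theta>" "\<theta> \<le> 1" and ep: "0 < \<epsilon>"
    and gap: "\<And>i. v i \<noteq> \<alpha> \<Longrightarrow> \<epsilon> \<le> \<bar>v i - \<alpha>\<bar>"
    and tdef: "\<And>i. t i = (if v i < \<alpha> then 0 else if v i = \<alpha> then \<theta> else 1)"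
    and ub: "\<And>i. 0 \<le> u i \<and> u i \<le> 1"
    and meq: "(\<Sum>i\<in>UNIV. u i * d i) = (\<Sum>i\<in>UNIV. t i * d i)"
  shows "(\<Sum>i\<in>UNIV. (\<epsilon>*(t i)^2 - 2*t i* v i)*d i) + \<epsilon> * (\<Sum>i\<in>UNIV. (u i - t i)^2*d i)
         \<le> (\<Sum>i\<in>UNIV. (\<epsilon>*(u i)^2 - 2*u i* v i)*d i)"
proof -
  define c where "c = \<alpha> - \<epsilon> * \<theta>"
  have pw: "(\<epsilon>*(t i)^2 - 2*t i* v i)*d i + \<epsilon>*((u i - t i)^2*d i) - 2*c*(u i*d i - t i*d i)
        \<le> (\<epsilon>*(u i)^2 - 2*u i* v i)*d i" for i
  proof (rule key_pointwise)
    show "0 \<le> d i" using dpos[of i] by simp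
    show "0 \<le> (u i - t i) * (\<epsilon> * t i - v i + c)"
    proof (cases "v i < \<alpha>")
      case True
      then have "t i = 0" using tdef by simp
      moreover have "\<epsilon> \<le> \<alpha> - v i" using gap[of i] True by simp
      moreover have "\<epsilon> * \<theta> \<le> \<epsilon>" using th ep by (simp add: mult_left_le)
      ultimately show ?thesis using ub[of i] unfolding c_def by simp
    next
      case False
      show ?thesis
      proof (cases "v i = \<alpha>")
        case True
        then show ?thesis using tdef[of i] unfolding c_def by simp
      next
        case F2: False
        then have "t i = 1" using tdef False by simp
        moreover have "\<epsilon> \<le> v i - \<alpha>" using gap[of i] F2 False by simp
        moreover have "0 \<le> \<epsilon> * \<theta>" using th ep by simp
        ultimately have "u i - t i \<le> 0" "\<epsilon> * t i - v i + c \<le> 0" using ub[of i] unfolding c_def by auto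
        then show ?thesis by (simp add: mult_nonpos_nonpos)
      qed
    qed
  qed
  have "(\<Sum>i\<in>UNIV. (\<epsilon>*(t i)^2 - 2*t i* v i)*d i + \<epsilon>*((u i - t i)^2*d i) - 2*c*(u i*d i - t i*d i))
        \<le> (\<Sum>i\<in>UNIV. (\<epsilon>*(u i)^2 - 2*u i* v i)*d i)"
    by (rule sum_mono) (rule pw)
  moreover have "(\<Sum>i\<in>UNIV. (\<epsilon>*(t i)^2 - 2*t i* v i)*d i + \<epsilon>*((u i - t i)^2*d i) - 2*c*(u i*d i - t i*d i))
     = (\<Sum>i\<in>UNIV. (\<epsilon>*(t i)^2 - 2*t i* v i)*d i) + \<epsilon> * (\<Sum>i\<in>UNIV. (u i - t i)^2*d i)
       - 2*c*((\<Sum>i\<in>UNIV. u i * d i) - (\<Sum>i\<in>UNIV. t i * d i))"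
    by (simp only: sum.distrib sum_subtractf sum_distrib_left[symmetric])
  ultimately show ?thesis using meq by simp
qed

theorem theorem31:
  fixes w :: "'n::finite \<Rightarrow> 'n \<Rightarrow> real" and r \<tau> :: real and un :: "real^'n" and k :: nat
  assumes "weighted_graph w" and "0 \<le> r" and "r \<le> 1" and "0 < \<tau>"
    and "unit_valued un"
    and "0 < mass w r un" and "mass w r un < mass w r ones"
    and "k < length (values_sorted (heat w r \<tau> un))"
    and "(\<Sum>l\<in>{Suc k..<length (values_sorted (heat w r \<tau> un))}.
            level_mass w r (heat w r \<tau> un) (values_sorted (heat w r \<tau> un) ! l)) < mass w r un"
    and "mass w r un \<le> (\<Sum>l\<in>{k..<length (values_sorted (heat w r \<tau> un))}.
            level_mass w r (heat w r \<tau> un) (values_sorted (heat w r \<tau> un) ! l))"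
  shows "let v = heat w r \<tau> un; M = mass w r un; \<alpha>s = values_sorted v; K = length \<alpha>s;
             target = (\<chi> i. if v $ i < \<alpha>s ! k then 0
                             else if v $ i = \<alpha>s ! k then
                               (M - (\<Sum>l\<in>{Suc k..<K}. level_mass w r v (\<alpha>s ! l))) / level_mass w r v (\<alpha>s ! k)
                             else 1)
         in (\<exists>\<delta>>0. \<forall>lam. 1 - \<delta> < lam \<and> lam < 1 \<longrightarrow>
                 (\<forall>u. is_minimiser w r lam M v u \<longleftrightarrow> u = target))
            \<and> ((\<lambda>lam. THE u. is_minimiser w r lam M v u) \<longlongrightarrow> target) (at_left 1)"
proof -
  define v where "v = heat w r \<tau> un"
  define M where "M = mass w r un"
  define \<alpha>s where "\<alpha>s = values_sorted v"
  define K where "K = length \<alpha>s"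
  define d where "d = dr w r"
  define \<alpha> where "\<alpha> = \<alpha>s ! k"
  define S where "S = (\<Sum>l\<in>{Suc k..<K}. level_mass w r v (\<alpha>s ! l))"
  define a where "a = level_mass w r v \<alpha>"
  define \<theta> where "\<theta> = (M - S) / a"
  define target where "target = (\<chi> i. if v $ i < \<alpha> then 0 else if v $ i = \<alpha> then \<theta> else (1::real))"
  have kK: "k < K" using assms(8) unfolding K_def \<alpha>s_def v_def .
  have SM: "S < M" using assms(9) unfolding S_def M_def K_def \<alpha>s_def v_def .
  have MSa: "M \<le> S + a"
  proof -
    have "(\<Sum>l\<in>{k..<K}. level_mass w r v (\<alpha>s ! l)) = a + S"
      unfolding a_def S_def \<alpha>_def using kK by (simp add: sum.atLeast_Suc_lessThan)
    then show ?thesis using assms(10) unfolding M_def K_def \<alpha>s_def v_def by simp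
  qed
  have dpos: "0 < d i" for i
  proof (cases "r = 0")
    case True then show ?thesis unfolding d_def dr_def rpow_def by simp
  next
    case rne: False
    have wg: "\<forall>i j. w i j = w j i" "\<forall>i j. 0 \<le> w i j" "\<forall>i. w i i = 0"
         "\<forall>i j. (i, j) \<in> {(a, b). 0 < w a b}\<^sup>*"
      using assms(1) unfolding weighted_graph_def by auto
    have dge: "0 \<le> deg w i" unfolding deg_def using wg(2) by (simp add: sum_nonneg)
    show ?thesis
    proof (cases "deg w i = 0")
      case False
      then have "0 < deg w i" using dge by simp
      then show ?thesis unfolding d_def dr_def rpow_def using rne by simp
    next
      case True
      then have w0: "\<forall>j. w i j = 0"
        unfolding deg_def using wg(2) by (simp add: sum_nonneg_eq_0_iff)
      have single: "j = i" for j
      proof -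
        have "(i, j) \<in> {(a, b). 0 < w a b}\<^sup>*" using wg(4) by blast
        then show ?thesis
          by (cases rule: converse_rtranclE) (use w0 in auto)
      qed
      have U: "(UNIV::'n set) = {i}" using single by auto
      have "mass w r un = (\<Sum>j\<in>{i}. un $ j * dr w r j)"
        unfolding mass_def ipV_def ones_def U[symmetric] by simp
      then have "mass w r un = un $ i * dr w r i" by simp
      moreover have "dr w r i = 0" unfolding dr_def rpow_def using True rne by simp
      ultimately show ?thesis using assms(6) by simp
    qed
  qed
  have dnn: "0 \<le> d i" for i using dpos[of i] by simp
  have fin: "finite (range (\<lambda>i. v $ i))" by simp
  have setas: "set \<alpha>s = range (\<lambda>i. v $ i)"
    unfolding \<alpha>s_def values_sorted_def using fin by simp
  have ssort: "sorted_wrt (<) \<alpha>s"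
    unfolding \<alpha>s_def values_sorted_def by (rule strict_sorted_list_of_set)
  have lt: "i < j \<Longrightarrow> j < K \<Longrightarrow> \<alpha>s ! i < \<alpha>s ! j" for i j
    using ssort unfolding sorted_wrt_iff_nth_less K_def by blast
  have le: "i \<le> j \<Longrightarrow> j < K \<Longrightarrow> \<alpha>s ! i \<le> \<alpha>s ! j" for i j
    using lt by (cases "i = j") (auto intro: less_imp_le)
  have \<alpha>in: "\<alpha> \<in> range (\<lambda>i. v $ i)"
    using kK setas unfolding \<alpha>_def K_def by (metis nth_mem)
  then obtain i0 where i0: "v $ i0 = \<alpha>" by auto
  have apos: "0 < a"
  proof -
    have "d i0 \<le> (\<Sum>i\<in>{i. v $ i = \<alpha>}. d i)"
      by (rule member_le_sum) (use i0 dnn in auto)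
    then show ?thesis using dpos[of i0] unfolding a_def level_mass_def d_def by simp
  qed
  have th0: "0 < \<theta>" unfolding \<theta>_def using SM apos by simp
  have th1: "\<theta> \<le> 1" unfolding \<theta>_def using MSa apos by (simp add: divide_le_eq)
  have upper: "{x \<in> range (\<lambda>i. v $ i). \<alpha> < x} = (\<lambda>l. \<alpha>s ! l) ` {Suc k..<K}"
  proof
    show "{x \<in> range (\<lambda>i. v $ i). \<alpha> < x} \<subseteq> (\<lambda>l. \<alpha>s ! l) ` {Suc k..<K}"
    proof
      fix x assume x: "x \<in> {x \<in> range (\<lambda>i. v $ i). \<alpha> < x}"
      then have "x \<in> set \<alpha>s" using setas by auto
      then obtain j where j: "j < K" "x = \<alpha>s ! j" unfolding K_def by (metis in_set_conv_nth)
      have "\<not> j \<le> k" using le[of j k] kK x j unfolding \<alpha>_def by auto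
      then show "x \<in> (\<lambda>l. \<alpha>s ! l) ` {Suc k..<K}" using j by auto
    qed
  next
    show "(\<lambda>l. \<alpha>s ! l) ` {Suc k..<K} \<subseteq> {x \<in> range (\<lambda>i. v $ i). \<alpha> < x}"
    proof
      fix x assume "x \<in> (\<lambda>l. \<alpha>s ! l) ` {Suc k..<K}"
      then obtain j where j: "Suc k \<le> j" "j < K" "x = \<alpha>s ! j" by auto
      then have "x \<in> set \<alpha>s" unfolding K_def by simp
      moreover have "\<alpha> < x" using lt[of k j] j unfolding \<alpha>_def by simp
      ultimately show "x \<in> {x \<in> range (\<lambda>i. v $ i). \<alpha> < x}" using setas by auto
    qed
  qed
  have injas: "inj_on (\<lambda>l. \<alpha>s ! l) {Suc k..<K}"
  proof (rule inj_onI)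
    fix i j assume "i \<in> {Suc k..<K}" "j \<in> {Suc k..<K}" "\<alpha>s ! i = \<alpha>s ! j"
    then show "i = j" using lt[of i j] lt[of j i] by (cases i j rule: linorder_cases) auto
  qed
  have Ssum: "S = (\<Sum>i\<in>{i. \<alpha> < v $ i}. d i)"
  proof -
    have "S = (\<Sum>x\<in>(\<lambda>l. \<alpha>s ! l) ` {Suc k..<K}. level_mass w r v x)"
      unfolding S_def by (simp add: sum.reindex[OF injas])
    also have "\<dots> = (\<Sum>x\<in>{x \<in> range (\<lambda>i. v $ i). \<alpha> < x}. (\<Sum>i\<in>{i. i \<in> {i. \<alpha> < v $ i} \<and> v $ i = x}. d i))"
      unfolding upper[symmetric] level_mass_def d_def
    proof (rule sum.cong)
      fix x assume "x \<in> {x \<in> range (\<lambda>i. v $ i). \<alpha> < x}"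
      then have "{i. v $ i = x} = {i. i \<in> {i. \<alpha> < v $ i} \<and> v $ i = x}" by auto
      then show "sum (dr w r) {i. v $ i = x} = sum (dr w r) {i. i \<in> {i. \<alpha> < v $ i} \<and> v $ i = x}"
        by simp
    qed simp
    also have "\<dots> = (\<Sum>i\<in>{i. \<alpha> < v $ i}. d i)"
      by (rule sum.group) auto
    finally show ?thesis .
  qed
  have mass_target: "(\<Sum>i\<in>UNIV. target $ i * d i) = M"
  proof -
    have "(\<Sum>i\<in>UNIV. target $ i * d i) =
          (\<Sum>i\<in>UNIV. (if \<alpha> < v $ i then d i else 0) + \<theta> * (if v $ i = \<alpha> then d i else 0))"
      unfolding target_def by (rule sum.cong) auto
    also have "\<dots> = S + \<theta> * a"
      unfolding Ssum a_def level_mass_def d_def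
      by (simp add: sum.distrib sum_distrib_left[symmetric] sum.If_cases)
    also have "\<dots> = M" unfolding \<theta>_def using apos by simp
    finally show ?thesis .
  qed
  have target_unit: "unit_valued target"
    unfolding unit_valued_def target_def using th0 th1 by auto
  define G where "G = insert 1 ((\<lambda>i. \<bar>v $ i - \<alpha>\<bar>) ` {i. v $ i \<noteq> \<alpha>})"
  define \<delta> where "\<delta> = Min G"
  have Gfin: "finite G" unfolding G_def by simp
  have \<delta>pos: "0 < \<delta>" unfolding \<delta>_def using Gfin by (subst Min_gr_iff) (auto simp: G_def)
  have gap: "v $ i \<noteq> \<alpha> \<Longrightarrow> \<delta> \<le> \<bar>v $ i - \<alpha>\<bar>" for i
    unfolding \<delta>_def using Gfin by (intro Min_le) (auto simp: G_def)
  have objeq: "objective w r lam v u = (\<Sum>i\<in>UNIV. ((1 - lam)*(u $ i)^2 - 2*u $ i* v $ i)*d i)" for lam u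
    unfolding objective_def ipV_def d_def
    by (simp add: sum_distrib_left sum_subtractf[symmetric] algebra_simps power2_eq_square)
  have massu: "mass w r u = (\<Sum>i\<in>UNIV. u $ i * d i)" for u
    unfolding mass_def ipV_def ones_def d_def by simp
  have main: "\<forall>u. is_minimiser w r lam M v u \<longleftrightarrow> u = target" if lam: "1 - \<delta> < lam" "lam < 1" for lam
  proof -
    define \<epsilon> where "\<epsilon> = 1 - lam"
    have ep: "0 < \<epsilon>" using lam unfolding \<epsilon>_def by simp
    have gap': "v $ i \<noteq> \<alpha> \<Longrightarrow> \<epsilon> \<le> \<bar>v $ i - \<alpha>\<bar>" for i
      using gap[of i] lam unfolding \<epsilon>_def by simp
    have K: "objective w r lam v target + \<epsilon> * (\<Sum>i\<in>UNIV. (u $ i - target $ i)^2*d i)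
             \<le> objective w r lam v u" if "unit_valued u" "mass w r u = M" for u
      unfolding objeq \<epsilon>_def[symmetric]
    proof (rule key[where v="\<lambda>i. v $ i" and \<alpha>=\<alpha> and \<theta>=\<theta>])
      show "\<And>i. 0 < d i" by (rule dpos)
      show "0 < \<theta>" "\<theta> \<le> 1" "0 < \<epsilon>" by (fact th0, fact th1, fact ep)
      show "\<And>i. v $ i \<noteq> \<alpha> \<Longrightarrow> \<epsilon> \<le> \<bar>v $ i - \<alpha>\<bar>" by (rule gap')
      show "\<And>i. target $ i = (if v $ i < \<alpha> then 0 else if v $ i = \<alpha> then \<theta> else 1)"
        unfolding target_def by simp
      show "\<And>i. 0 \<le> u $ i \<and> u $ i \<le> 1" using that(1) unfolding unit_valued_def by blast
      show "(\<Sum>i\<in>UNIV. u $ i * d i) = (\<Sum>i\<in>UNIV. target $ i * d i)"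
        using that(2) mass_target massu by simp
    qed
    show ?thesis
    proof (intro allI iffI)
      fix u assume "u = target"
      then show "is_minimiser w r lam M v u"
        unfolding is_minimiser_def
      proof (intro conjI allI impI)
        show "unit_valued u" using \<open>u = target\<close> target_unit by simp
        show "mass w r u = M" using \<open>u = target\<close> mass_target massu by simp
        fix u' assume u': "unit_valued u' \<and> mass w r u' = M"
        have "0 \<le> \<epsilon> * (\<Sum>i\<in>UNIV. (u' $ i - target $ i)^2*d i)"
          using ep dnn by (simp add: sum_nonneg)
        then show "objective w r lam v u \<le> objective w r lam v u'"
          using K[of u'] u' \<open>u = target\<close> by simp
      qed
    next
      fix u assume m: "is_minimiser w r lam M v u"
      then have uu: "unit_valued u" "mass w r u = M"
        and le1: "objective w r lam v u \<le> objective w r lam v target"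
        using target_unit mass_target massu unfolding is_minimiser_def by auto
      have "\<epsilon> * (\<Sum>i\<in>UNIV. (u $ i - target $ i)^2*d i) \<le> 0" using K[OF uu] le1 by simp
      then have "(\<Sum>i\<in>UNIV. (u $ i - target $ i)^2*d i) \<le> 0" using ep
        by (simp add: mult_le_0_iff)
      moreover have "\<forall>i\<in>UNIV. 0 \<le> (u $ i - target $ i)^2*d i" using dnn by simp
      ultimately have "\<forall>i\<in>UNIV. (u $ i - target $ i)^2*d i = 0"
        using sum_nonneg_eq_0_iff[of UNIV "\<lambda>i. (u $ i - target $ i)^2*d i"]
        by (simp add: antisym sum_nonneg)
      then have "\<forall>i. u $ i = target $ i" using dpos by (metis UNIV_I less_irrefl mult_eq_0_iff power_eq_0_iff right_minus_eq)
      then show "u = target" by (simp add: vec_eq_iff)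
    qed
  qed
  have part1: "\<exists>\<delta>>0. \<forall>lam. 1 - \<delta> < lam \<and> lam < 1 \<longrightarrow>
                 (\<forall>u. is_minimiser w r lam M v u \<longleftrightarrow> u = target)"
    using \<delta>pos main by blast
  have part2: "((\<lambda>lam. THE u. is_minimiser w r lam M v u) \<longlongrightarrow> target) (at_left 1)"
  proof (rule Lim_transform_eventually[OF tendsto_const])
    have "eventually (\<lambda>x. x \<in> {1 - \<delta><..<1}) (at_left (1::real))"
      by (rule eventually_at_left_real) (use \<delta>pos in simp)
    then show "\<forall>\<^sub>F x in at_left 1. target = (THE u. is_minimiser w r x M v u)"
    proof (rule eventually_mono)
      fix x :: real assume "x \<in> {1 - \<delta><..<1}"
      then have "\<forall>u. is_minimiser w r x M v u \<longleftrightarrow> u = target" using main by simp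
      then show "target = (THE u. is_minimiser w r x M v u)" by simp
    qed
  qed
  show ?thesis
    unfolding Let_def
    using part1 part2
    unfolding target_def \<theta>_def S_def a_def \<alpha>_def K_def \<alpha>s_def M_def v_def
    by simp
qed

end
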